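(* Let $T,V,\alpha,\Omega,G$ satisfy the Standing Assumption (G), but with the bound in (ii) replaced by the stronger bound $|\widetilde G(t,x,z)|\le A_0(t,x)e^{B_0(t,x)|\mathrm{Im}(z)|}$ for $t\in(0,T)$, $x\in\mathbb{R}$, $z\in\Omega$. Let $F$ be holomorphic on $\Omega$ with $|F(z)|\le Ae^{B|\mathrm{Im}(z)|}$ for $z\in\Omega$, some $A,B\ge0$. Then for all $t\in(0,T)$, $x\in\mathbb{R}$, $$\lim_{\varepsilon\to0^+}\int_{\mathbb{R}}e^{-\varepsilon y^2}G(t,x,y)F(y)\,dy=\lim_{R_1,R_2\to\infty}\int_{-R_1}^{R_2}G(t,x,y)F(y)\,dy,$$ both limits existing.
   Context: Double sector: $S_\alpha:=\{0\}\cup\{z\ne0:\mathrm{Arg}(z)\in[0,\alpha]\cup[\pi,\pi+\alpha]\}$, $\mathrm{Arg}\in[0,2\pi)$. $\mathrm{AC}_{1,2}((0,T)\times\mathbb{R})$: functions $\Psi$ with $\Psi(\cdot,x)$ absolutely continuous on $(0,T)$ for all $x$ and $\Psi(t,\cdot),\partial_x\Psi(t,\cdot)$ absolutely continuous on $\mathbb{R}$ for all $t$. Standing Assumption (G): $T\in(0,\infty]$, $V:(0,T)\times\mathbb{R}\to\mathbb{C}$, $\alpha\in(0,\frac\pi2)$, $\Omega\supseteq S_\alpha$ open, $G:(0,T)\times\mathbb{R}\times\Omega\to\mathbb{C}$ holomorphic in $z$, such that: (i) for every $z\in S_\alpha$, $G(\cdot,\cdot,z)\in\mathrm{AC}_{1,2}$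 and $i\partial_tG=(-\partial_x^2+V)G$ a.e.; (ii) there is an absolutely continuous $a:(0,T)\to(0,\infty)$ with $a(t)\to\infty$ as $t\to0^+$ such that $G(t,x,z)=e^{ia(t)(z-x)^2}\widetilde G(t,x,z)$ with $|\widetilde G(t,x,z)|\le A_0(t,x)e^{B_0(t,x)|z|}$ on $(0,T)\times\mathbb{R}\times\Omega$, $A_0,B_0\ge0$ continuous, and $A_0/\sqrt a$, $B_0$ extending continuously to $[0,T)\times\mathbb{R}$; (iii) $\lim_{t\to0^+}\widetilde G(t,x,z)/\sqrt{a(t)}=1/\sqrt{i\pi}$ for all $x,z$; (iv) $|\partial_x\widetilde G|,|\partial_x^2\widetilde G|,|\partial_t\widetilde G|\le A_1(t,x)e^{B_1(t,x)|z|}$ for $z\in S_\alpha$, with $A_1\ge0$ locally integrable on $(0,T)\times\mathbb{R}$ and $B_1\ge0$ continuous. *)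

theory Defs
  imports "HOL-Analysis.Analysis"
begin

definition abs_cont_on_interval :: "(real \<Rightarrow> 'a::real_normed_vector) \<Rightarrow> real \<Rightarrow> real \<Rightarrow> bool" where
  "abs_cont_on_interval f a b \<longleftrightarrow>
     (\<forall>e>0. \<exists>d>0. \<forall>(n::nat) (l::nat \<Rightarrow> real) (r::nat \<Rightarrow> real).
        (\<forall>i<n. a \<le> l i \<and> l i \<le> r i \<and> r i \<le> b) \<and>
        (\<forall>i<n. \<forall>j<n. i \<noteq> j \<longrightarrow> r i \<le> l j \<or> r j \<le> l i) \<and>
        (\<Sum>i<n. r i - l i) < d
        \<longrightarrow> (\<Sum>i<n. norm (f (r i) - f (l i))) < e)"

definition abs_cont_on :: "(real \<Rightarrow> 'a::real_normed_vector) \<Rightarrow> real set \<Rightarrow> bool" where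
  "abs_cont_on f I \<longleftrightarrow> (\<forall>a b. a \<le> b \<longrightarrow> {a..b} \<subseteq> I \<longrightarrow> abs_cont_on_interval f a b)"

definition time_int :: "ereal \<Rightarrow> real set" where
  "time_int T = {t. 0 < t \<and> ereal t < T}"

text \<open>Double sector S_alpha: 0, together with all z \<noteq> 0 whose argument (taken in [0,2pi))
  lies in [0,alpha] \<union> [pi,pi+alpha] (alpha < pi/2, so these angles are in [0,2pi)).\<close>
definition double_sector :: "real \<Rightarrow> complex set" where
  "double_sector \<alpha> = {z. z = 0 \<or>
      (\<exists>\<theta>. (\<theta> \<in> {0..\<alpha>} \<or> \<theta> \<in> {pi..pi+\<alpha>}) \<and> z = complex_of_real (cmod z) * cis \<theta>)}"

text \<open>Psi(t,.) is required to be differentiable everywhere with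
  x-derivative Dx(t,.), which is absolutely continuous (this is the class, since an absolutely
  continuous function whose a.e. derivative is absolutely continuous is C^1).\<close>
definition AC12 :: "ereal \<Rightarrow> (real \<Rightarrow> real \<Rightarrow> complex) \<Rightarrow> (real \<Rightarrow> real \<Rightarrow> complex) \<Rightarrow> bool" where
  "AC12 T \<Psi> Dx \<longleftrightarrow>
     (\<forall>x. abs_cont_on (\<lambda>t. \<Psi> t x) (time_int T)) \<and>
     (\<forall>t\<in>time_int T. abs_cont_on (\<lambda>x. \<Psi> t x) UNIV \<and> abs_cont_on (\<lambda>x. Dx t x) UNIV \<and>
        (\<forall>x. ((\<lambda>y. \<Psi> t y) has_vector_derivative Dx t x) (at x)))"

definition assumption_G_Im ::
  "ereal \<Rightarrow> (real \<Rightarrow> real \<Rightarrow> complex) \<Rightarrow> real \<Rightarrow> complex set \<Rightarrow>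
   (real \<Rightarrow> real \<Rightarrow> complex \<Rightarrow> complex) \<Rightarrow> bool" where
  "assumption_G_Im T V \<alpha> \<Omega> G \<longleftrightarrow>
    0 < T \<and> 0 < \<alpha> \<and> \<alpha> < pi / 2 \<and> open \<Omega> \<and> double_sector \<alpha> \<subseteq> \<Omega> \<and>
    (\<forall>t\<in>time_int T. \<forall>x. (G t x) holomorphic_on \<Omega>) \<and>
    \<comment> \<open>(i)\<close>
    (\<forall>z\<in>double_sector \<alpha>. \<exists>Dx.
       AC12 T (\<lambda>t x. G t x z) Dx \<and>
       (AE p in lborel. fst p \<in> time_int T \<longrightarrow>
          (\<exists>Gt Gxx. ((\<lambda>s. G s (snd p) z) has_vector_derivative Gt) (at (fst p)) \<and>
                    ((\<lambda>y. Dx (fst p) y) has_vector_derivative Gxx) (at (snd p)) \<and>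
                    \<i> * Gt = - Gxx + V (fst p) (snd p) * G (fst p) (snd p) z))) \<and>
    (\<exists>a Gtil A0 B0 A1 B1.
       \<comment> \<open>(ii)\<close>
       abs_cont_on a (time_int T) \<and> (\<forall>t\<in>time_int T. 0 < a t) \<and>
       filterlim a at_top (at_right 0) \<and>
       (\<forall>t\<in>time_int T. \<forall>x. \<forall>z\<in>\<Omega>.
          G t x z = exp (\<i> * complex_of_real (a t) * (z - complex_of_real x)\<^sup>2) * Gtil t x z) \<and>
       (\<forall>t\<in>time_int T. \<forall>x. \<forall>z\<in>\<Omega>.
          cmod (Gtil t x z) \<le> A0 t x * exp (B0 t x * \<bar>Im z\<bar>)) \<and>
       (\<forall>t\<in>time_int T. \<forall>x. 0 \<le> A0 t x \<and> 0 \<le> B0 t x) \<and>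
       continuous_on (time_int T \<times> UNIV) (\<lambda>p. A0 (fst p) (snd p)) \<and>
       continuous_on (time_int T \<times> UNIV) (\<lambda>p. B0 (fst p) (snd p)) \<and>
       (\<exists>h. continuous_on ({t. 0 \<le> t \<and> ereal t < T} \<times> UNIV) h \<and>
            (\<forall>t\<in>time_int T. \<forall>x. h (t, x) = A0 t x / sqrt (a t))) \<and>
       (\<exists>h. continuous_on ({t. 0 \<le> t \<and> ereal t < T} \<times> UNIV) h \<and>
            (\<forall>t\<in>time_int T. \<forall>x. h (t, x) = B0 t x)) \<and>
       \<comment> \<open>(iii)\<close>
       (\<forall>x. \<forall>z\<in>\<Omega>. ((\<lambda>t. Gtil t x z / complex_of_real (sqrt (a t))) \<longlongrightarrow> 1 / csqrt (\<i> * pi))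
                      (at_right 0)) \<and>
       \<comment> \<open>(iv): bounds on the derivatives of G~ wherever they exist\<close>
       (\<forall>t\<in>time_int T. \<forall>x. 0 \<le> A1 t x \<and> 0 \<le> B1 t x) \<and>
       (\<forall>K. compact K \<longrightarrow> K \<subseteq> time_int T \<times> UNIV \<longrightarrow>
            (\<lambda>p. A1 (fst p) (snd p)) integrable_on K) \<and>
       continuous_on (time_int T \<times> UNIV) (\<lambda>p. B1 (fst p) (snd p)) \<and>
       (\<forall>z\<in>double_sector \<alpha>. \<forall>t\<in>time_int T. \<forall>x.
          (\<forall>D. ((\<lambda>s. Gtil s x z) has_vector_derivative D) (at t) \<longrightarrow>
               cmod D \<le> A1 t x * exp (B1 t x * cmod z)) \<and>
          (\<forall>g'. (\<forall>y. ((\<lambda>y'. Gtil t y' z) has_vector_derivative g' y) (at y)) \<longrightarrow>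
               cmod (g' x) \<le> A1 t x * exp (B1 t x * cmod z) \<and>
               (\<forall>D. (g' has_vector_derivative D) (at x) \<longrightarrow>
                    cmod D \<le> A1 t x * exp (B1 t x * cmod z)))))"

end

theory Submission
  imports Defs "HOL-Complex_Analysis.Complex_Analysis" "HOL-Probability.Probability" "HOL-Real_Asymp.Real_Asymp"
begin

definition cone :: "real \<Rightarrow> real \<Rightarrow> complex set" where
  "cone \<tau> \<sigma> = {z. 0 \<le> \<sigma> * Im z \<and> \<sigma> * Im z \<le> \<tau> * (\<sigma> * Re z)}"

lemma cone_convex: "convex (cone \<tau> \<sigma>)"
  unfolding convex_def cone_def
proof (intro ballI allI impI, clarsimp)
  fix x y :: complex and u v :: real
  assume h: "0 \<le> \<sigma> * Im x" "\<sigma> * Im x \<le> \<tau> * (\<sigma> * Re x)" "0 \<le> \<sigma> * Im y"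
    "\<sigma> * Im y \<le> \<tau> * (\<sigma> * Re y)" "0 \<le> u" "0 \<le> v" "u + v = 1"
  have e1: "\<sigma> * (u * Im x + v * Im y) = u * (\<sigma> * Im x) + v * (\<sigma> * Im y)" by algebra
  have e2: "\<tau> * (\<sigma> * (u * Re x + v * Re y)) = u * (\<tau> * (\<sigma> * Re x)) + v * (\<tau> * (\<sigma> * Re y))" by algebra
  show "0 \<le> \<sigma> * (u * Im x + v * Im y) \<and> \<sigma> * (u * Im x + v * Im y) \<le> \<tau> * (\<sigma> * (u * Re x + v * Re y))"
    unfolding e1 e2 using h by (auto intro!: add_mono mult_left_mono)
qed

lemma pos_sector:
  fixes z :: complex
  assumes "0 \<le> Im z" "Im z \<le> tan \<alpha> * Re z" "z \<noteq> 0" "0 < \<alpha>" "\<alpha> < pi/2"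
  shows "\<exists>\<theta>\<in>{0..\<alpha>}. z = complex_of_real (cmod z) * cis \<theta>"
proof -
  have ta: "tan \<alpha> > 0" using assms by (simp add: tan_gt_zero)
  have "Re z \<noteq> 0 \<or> Im z \<noteq> 0" using assms(3) complex_eq_iff by auto
  hence rp: "Re z > 0"
  proof -
    have "Re z \<ge> 0"
    proof (rule ccontr)
      assume "\<not> Re z \<ge> 0"
      hence "tan \<alpha> * Re z < 0" using ta by (simp add: mult_pos_neg)
      thus False using assms(1,2) by linarith
    qed
    moreover have "Re z \<noteq> 0"
    proof
      assume "Re z = 0"
      hence "Im z = 0" using assms(1,2) by simp
      thus False using \<open>Re z = 0\<close> assms(3) complex_eq_iff by auto
    qed
    ultimately show ?thesis by simp
  qed
  define q where "q = Im z / Re z"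
  have q0: "0 \<le> q" using assms rp by (simp add: q_def)
  have qt: "q \<le> tan \<alpha>" using assms rp by (simp add: q_def pos_divide_le_eq)
  define \<theta> where "\<theta> = arctan q"
  have "\<theta> \<ge> 0" using q0 arctan_le_iff[of 0 q] by (simp add: \<theta>_def)
  moreover have "\<theta> \<le> \<alpha>" using arctan_le_iff[of q "tan \<alpha>"] qt arctan_tan[of \<alpha>] assms
    by (simp add: \<theta>_def)
  moreover have "z = complex_of_real (cmod z) * cis \<theta>"
  proof -
    have s: "sqrt (1 + q\<^sup>2) > 0" by (simp add: add_pos_nonneg)
    have "cmod z = sqrt ((Re z)\<^sup>2 * (1 + q\<^sup>2))"
      unfolding cmod_def q_def using rp by (simp add: field_simps power2_eq_square)
    also have "\<dots> = Re z * sqrt (1 + q\<^sup>2)" using rp by (simp add: real_sqrt_mult)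
    finally have c: "cmod z = Re z * sqrt (1 + q\<^sup>2)" .
    show ?thesis unfolding complex_eq_iff using s rp
      by (simp add: c \<theta>_def cos_arctan sin_arctan q_def)
  qed
  ultimately show ?thesis by auto
qed

lemma cone_sub:
  assumes "0 < \<tau>" "\<tau> \<le> tan \<alpha>" "0 < \<alpha>" "\<alpha> < pi/2" "\<sigma> = 1 \<or> \<sigma> = -1"
  shows "cone \<tau> \<sigma> \<subseteq> double_sector \<alpha>"
proof
  fix z assume z: "z \<in> cone \<tau> \<sigma>"
  show "z \<in> double_sector \<alpha>"
  proof (cases "z = 0")
    case True thus ?thesis by (simp add: double_sector_def)
  next
    case False
    define w where "w = complex_of_real \<sigma> * z"
    have w0: "w \<noteq> 0" using False assms(5) by (auto simp: w_def)
    have wi: "0 \<le> Im w" "Im w \<le> \<tau> * Re w" using z by (auto simp: cone_def w_def)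
    have "\<tau> * Re w \<le> tan \<alpha> * Re w"
    proof (cases "Re w \<ge> 0")
      case True thus ?thesis using assms(2) by (simp add: mult_right_mono)
    next
      case False
      hence "\<tau> * Re w < 0" using assms(1) by (simp add: mult_pos_neg)
      thus ?thesis using wi by linarith
    qed
    then obtain \<theta> where th: "\<theta> \<in> {0..\<alpha>}" "w = complex_of_real (cmod w) * cis \<theta>"
      using pos_sector[of w \<alpha>] wi w0 assms by fastforce
    have cw: "cmod w = cmod z" using assms(5) by (auto simp: w_def)
    show ?thesis
    proof (cases "\<sigma> = 1")
      case True
      hence "z = complex_of_real (cmod z) * cis \<theta>" using th cw by (simp add: w_def)
      thus ?thesis using th by (auto simp: double_sector_def)
    next
      case False
      hence s: "\<sigma> = -1" using assms(5) by simp
      have "z = - w" by (simp add: w_def s)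
      also have "\<dots> = complex_of_real (cmod z) * cis (\<theta> + pi)"
        using th cw by (simp add: cis_def complex_eq_iff)
      finally have "z = complex_of_real (cmod z) * cis (\<theta> + pi)" .
      moreover have "\<theta> + pi \<in> {pi..pi+\<alpha>}" using th by auto
      ultimately show ?thesis unfolding double_sector_def by blast
    qed
  qed
qed

lemma exp_neg_set_integrable: "set_integrable lborel {0::real..} (\<lambda>s. exp (- s))"
proof -
  have "(\<lambda>s. exp (- 1 * s)) integrable_on {0::real..}"
    by (rule integrable_on_exp_minus_to_infinity) simp
  hence "(\<lambda>s::real. exp (- s)) absolutely_integrable_on {0..}"
    by (intro nonnegative_absolutely_integrable_1) auto
  hence "integrable lebesgue (\<lambda>x::real. indicator {0..} x *\<^sub>R exp (- x))"
    unfolding set_integrable_def .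
  thus ?thesis unfolding set_integrable_def
    by (subst (asm) integrable_completion) auto
qed

lemma quad_bound:
  fixes a b s :: real assumes "0 < a"
  shows "- a * s\<^sup>2 + b * s \<le> - s + (b + 1)\<^sup>2 / (4 * a)"
proof -
  have "0 \<le> a * (s - (b + 1) / (2 * a))\<^sup>2" using assms by simp
  also have "a * (s - (b + 1) / (2 * a))\<^sup>2 = a * s\<^sup>2 - (b + 1) * s + (b + 1)\<^sup>2 / (4 * a)"
    using assms by (simp add: field_simps power2_eq_square)
  finally have h: "0 \<le> a * s\<^sup>2 - (b + 1) * s + (b + 1)\<^sup>2 / (4 * a)" .
  show ?thesis using h unfolding distrib_right by linarith
qed

lemma exp_int_bound:
  fixes D b :: real assumes "0 < D" "0 \<le> b"
  shows "((\<lambda>s. exp (- D * s)) has_integral (1 - exp (- D * b)) / D) {0..b}"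
proof -
  have "((\<lambda>s. exp (- D * s)) has_integral ((\<lambda>s. - exp (- D * s) / D) b - (\<lambda>s. - exp (- D * s) / D) 0)) {0..b}"
    apply (rule fundamental_theorem_of_calculus)
    using assms apply simp
    apply (rule has_real_derivative_iff_has_vector_derivative[THEN iffD1])
    apply (rule DERIV_subset[where s=UNIV])
     apply (auto intro!: derivative_eq_intros simp: field_simps assms(1)[THEN less_imp_neq, symmetric])
    done
  thus ?thesis by (simp add: diff_divide_distrib)
qed

lemma "((\<lambda>s. complex_of_real (\<sigma> * s)) has_vector_derivative complex_of_real \<sigma>) (at s within X)"
  by (auto intro!: derivative_eq_intros)
lemma "((\<lambda>s. complex_of_real \<sigma> * complex_of_real s * (1 + \<i> * complex_of_real \<tau>)) has_vector_derivative complex_of_real \<sigma> * (1 + \<i> * complex_of_real \<tau>)) (at s within X)"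
  by (auto intro!: derivative_eq_intros)
lemma "((\<lambda>s. complex_of_real \<sigma> * (complex_of_real R + \<i> * complex_of_real s)) has_vector_derivative complex_of_real \<sigma> * \<i>) (at s within X)"
  by (auto intro!: derivative_eq_intros)

lemma half_line:
  fixes k :: "complex \<Rightarrow> complex" and \<Omega> :: "complex set"
  assumes hol: "k holomorphic_on \<Omega>" and op: "open \<Omega>" and sub: "cone \<tau> \<sigma> \<subseteq> \<Omega>"
    and tau: "0 < \<tau>" "\<tau> < 1" and sig: "\<sigma> = 1 \<or> \<sigma> = -1"
    and c: "0 < c" and M: "0 \<le> M" and b: "0 \<le> \<beta>"
    and bnd: "\<And>z. z \<in> cone \<tau> \<sigma> \<Longrightarrow> cmod (k z) \<le> M * exp (-2*c*(Re z - x)*Im z + \<beta>*\<bar>Im z\<bar>)"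
  shows "set_integrable lborel {0..} (\<lambda>s. complex_of_real \<sigma> * (1 + \<i> * complex_of_real \<tau>) *
            k (complex_of_real \<sigma> * complex_of_real s * (1 + \<i> * complex_of_real \<tau>)))" (is ?A)
    and "((\<lambda>R. integral {0..R} (\<lambda>s. complex_of_real \<sigma> * k (complex_of_real (\<sigma> * s)))) \<longlongrightarrow>
          (LINT s:{0..}|lborel. complex_of_real \<sigma> * (1 + \<i> * complex_of_real \<tau>) *
            k (complex_of_real \<sigma> * complex_of_real s * (1 + \<i> * complex_of_real \<tau>)))) at_top" (is ?B)
proof -
  define g where "g = (\<lambda>s. complex_of_real \<sigma> * (1 + \<i> * complex_of_real \<tau>) *
            k (complex_of_real \<sigma> * complex_of_real s * (1 + \<i> * complex_of_real \<tau>)))"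
  define p1 where "p1 = (\<lambda>s. complex_of_real (\<sigma> * s))"
  define p2 where "p2 = (\<lambda>s. complex_of_real \<sigma> * complex_of_real s * (1 + \<i> * complex_of_real \<tau>))"
  define p3 where "p3 = (\<lambda>R s. complex_of_real \<sigma> * (complex_of_real R + \<i> * complex_of_real s))"
  have ss: "\<sigma> * \<sigma> = 1" using sig by auto
  have ss2: "\<And>y. \<sigma> * (\<sigma> * y) = y" using sig by auto
  have as: "\<bar>\<sigma>\<bar> = 1" using sig by auto
  have contk: "continuous_on \<Omega> k" using hol by (rule holomorphic_on_imp_continuous_on)
  obtain \<Phi> where \<Phi>: "\<And>z. z \<in> cone \<tau> \<sigma> \<Longrightarrow> (\<Phi> has_field_derivative k z) (at z within cone \<tau> \<sigma>)"
  proof (rule holomorphic_convex_primitive[OF cone_convex finite.emptyI])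
    show "continuous_on (cone \<tau> \<sigma>) k" using contk sub by (rule continuous_on_subset)
    fix z assume "z \<in> interior (cone \<tau> \<sigma>) - {}"
    hence "z \<in> \<Omega>" using sub interior_subset by auto
    thus "k field_differentiable at z" using hol op by (simp add: holomorphic_on_imp_differentiable_at)
  qed auto
  have ftc: "((\<lambda>s. p' s * k (p s)) has_integral (\<Phi> (p b) - \<Phi> (p a))) {a..b}"
    if ab: "a \<le> b" and dp: "\<And>s. s \<in> {a..b} \<Longrightarrow> (p has_vector_derivative p' s) (at s within {a..b})"
      and im: "p ` {a..b} \<subseteq> cone \<tau> \<sigma>" for p :: "real \<Rightarrow> complex" and p' a b
  proof -
    have "((\<Phi> \<circ> p) has_integral ((\<Phi> \<circ> p) b - (\<Phi> \<circ> p) a)) {a..b}" if False using that by simp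
    have "((\<lambda>s. p' s * k (p s)) has_integral ((\<Phi> \<circ> p) b - (\<Phi> \<circ> p) a)) {a..b}"
    proof (rule fundamental_theorem_of_calculus[OF ab])
      fix s assume s: "s \<in> {a..b}"
      have "p s \<in> cone \<tau> \<sigma>" using im s by auto
      hence "(\<Phi> has_field_derivative k (p s)) (at (p s) within p ` {a..b})"
        using \<Phi> im by (blast intro: DERIV_subset)
      thus "((\<Phi> \<circ> p) has_vector_derivative p' s * k (p s)) (at s within {a..b})"
        by (rule field_vector_diff_chain_within[OF dp[OF s]])
    qed
    thus ?thesis by simp
  qed
  have I1: "((\<lambda>s. complex_of_real \<sigma> * k (p1 s)) has_integral (\<Phi> (p1 R) - \<Phi> (p1 0))) {0..R}"
    if "0 \<le> R" for R
    by (rule ftc[OF that]) (use tau in \<open>auto simp: p1_def cone_def ss ss2 intro!: derivative_eq_intros\<close>)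
  have cone_iff: "z \<in> cone \<tau> \<sigma> \<longleftrightarrow> 0 \<le> \<sigma> * Im z \<and> \<sigma> * Im z \<le> \<tau> * (\<sigma> * Re z)" for z
    by (simp add: cone_def)
  have re2: "Re (p2 s) = \<sigma> * s" "Im (p2 s) = \<sigma> * (s * \<tau>)" for s by (simp_all add: p2_def)
  have re3: "Re (p3 R s) = \<sigma> * R" "Im (p3 R s) = \<sigma> * s" for R s by (simp_all add: p3_def)
  have im2: "p2 ` {0..R} \<subseteq> cone \<tau> \<sigma>" for R
    using tau by (auto simp: cone_iff re2 ss2)
  have im3: "p3 R ` {0..R*\<tau>} \<subseteq> cone \<tau> \<sigma>" for R
    using tau by (auto simp: cone_iff re3 ss2 mult.commute[of \<tau>])
  have I2: "((\<lambda>s. (complex_of_real \<sigma> * (1 + \<i> * complex_of_real \<tau>)) * k (p2 s)) has_integral (\<Phi> (p2 R) - \<Phi> (p2 0))) {0..R}" if "0 \<le> R" for R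
    by (rule ftc[OF that _ im2]) (auto simp: p2_def intro!: derivative_eq_intros)
  have gp2: "g = (\<lambda>s. (complex_of_real \<sigma> * (1 + \<i> * complex_of_real \<tau>)) * k (p2 s))"
    by (simp add: g_def p2_def)
  have I3: "((\<lambda>s. (complex_of_real \<sigma> * \<i>) * k (p3 R s)) has_integral (\<Phi> (p3 R (R*\<tau>)) - \<Phi> (p3 R 0))) {0..R*\<tau>}"
    if "0 \<le> R" for R
    by (rule ftc[OF _ _ im3]) (use that tau in \<open>auto simp: p3_def intro!: derivative_eq_intros\<close>)
  have eqR: "integral {0..R} (\<lambda>s. complex_of_real \<sigma> * k (complex_of_real (\<sigma> * s))) =
      integral {0..R} g - integral {0..R*\<tau>} (\<lambda>s. (complex_of_real \<sigma> * \<i>) * k (p3 R s))" if R: "0 \<le> R" for R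
  proof -
    have e1: "p1 0 = p2 0" "p3 R 0 = p1 R" "p3 R (R*\<tau>) = p2 R"
      by (simp_all add: p1_def p2_def p3_def algebra_simps)
    show ?thesis
      using integral_unique[OF I1[OF R]] integral_unique[OF I2[OF R]] integral_unique[OF I3[OF R]]
      unfolding gp2 e1 by (simp add: p1_def)
  qed
  have im2': "p2 ` {0..} \<subseteq> cone \<tau> \<sigma>"
    using tau by (auto simp: cone_iff re2 ss2)
  have contg: "continuous_on {0..} g"
    unfolding gp2
    by (intro continuous_intros continuous_on_compose2[OF contk, of _ p2])
       (use im2' sub in \<open>auto simp: p2_def intro!: continuous_intros\<close>)
  define b0 where "b0 = 2*c*\<tau>*\<bar>x\<bar> + \<beta>*\<tau>"
  define Cst where "Cst = cmod (1 + \<i> * complex_of_real \<tau>) * M * exp ((b0 + 1)\<^sup>2 / (4 * (2*c*\<tau>)))"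
  have ctau: "0 < 2*c*\<tau>" using c tau by simp
  have gbound: "norm (g s) \<le> Cst * exp (- s)" if s: "0 \<le> s" for s
  proof -
    define Ex where "Ex = -2*c*(Re (p2 s) - x)*Im (p2 s) + \<beta>*\<bar>Im (p2 s)\<bar>"
    have "Ex = -(2*c*\<tau>)* s\<^sup>2 + (2*c*\<tau>*(\<sigma>*x) + \<beta>*\<tau>)* s"
    proof -
      have "\<bar>Im (p2 s)\<bar> = s * \<tau>" using s tau as by (simp add: re2 abs_mult)
      thus ?thesis unfolding Ex_def re2 using ss
        by (simp add: algebra_simps power2_eq_square)
    qed
    also have "\<dots> \<le> -(2*c*\<tau>)* s\<^sup>2 + b0* s"
    proof -
      have "\<sigma>*x \<le> \<bar>x\<bar>" using sig by auto
      hence "2*c*\<tau>*(\<sigma>*x) \<le> 2*c*\<tau>*\<bar>x\<bar>" using ctau by (simp add: mult_left_mono)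
      hence "(2*c*\<tau>*(\<sigma>*x) + \<beta>*\<tau>)* s \<le> b0* s" unfolding b0_def using s
        by (intro mult_right_mono) auto
      thus ?thesis by linarith
    qed
    also have "\<dots> \<le> - s + (b0 + 1)\<^sup>2 / (4 * (2*c*\<tau>))" by (rule quad_bound[OF ctau])
    finally have Eb: "Ex \<le> - s + (b0 + 1)\<^sup>2 / (4 * (2*c*\<tau>))" .
    have "p2 s \<in> cone \<tau> \<sigma>" using im2' s by auto
    hence "cmod (k (p2 s)) \<le> M * exp Ex" unfolding Ex_def by (rule bnd)
    also have "\<dots> \<le> M * exp (- s + (b0 + 1)\<^sup>2 / (4 * (2*c*\<tau>)))"
      using Eb M by (intro mult_left_mono) auto
    finally have kb: "cmod (k (p2 s)) \<le> M * exp (- s + (b0 + 1)\<^sup>2 / (4 * (2*c*\<tau>)))" .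
    have "norm (g s) = cmod (1 + \<i> * complex_of_real \<tau>) * cmod (k (p2 s))"
      unfolding gp2 using as by (simp add: norm_mult)
    also have "\<dots> \<le> cmod (1 + \<i> * complex_of_real \<tau>) * (M * exp (- s + (b0 + 1)\<^sup>2 / (4 * (2*c*\<tau>))))"
      using kb by (intro mult_left_mono) auto
    also have "\<dots> = Cst * exp (- s)" unfolding Cst_def by (simp add: mult_exp_exp)
    finally show ?thesis .
  qed
  have Cst0: "0 \<le> Cst" unfolding Cst_def using M by simp
  have intA: "set_integrable lborel {0..} g"
  proof (rule set_integrable_bound)
    show "set_integrable lborel {0..} (\<lambda>s. Cst * exp (- s))"
      using exp_neg_set_integrable by (rule set_integrable_mult_right)
    have "(\<lambda>s. indicator {0::real..} s *\<^sub>R g s) \<in> borel_measurable borel"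
      by (rule borel_measurable_continuous_on_indicator[OF _ contg]) auto
    thus "set_borel_measurable lborel {0..} g" unfolding set_borel_measurable_def by simp
    show "AE s\<in>{0..} in lborel. norm (g s) \<le> norm (Cst * exp (- s))"
      using gbound Cst0 by (intro AE_I2) auto
  qed
  thus ?A unfolding g_def .
  have L1: "((\<lambda>R. integral {0..R} g) \<longlongrightarrow> (LINT s:{0..}|lborel. g s)) at_top"
  proof -
    have "((\<lambda>R. LINT s:{0..R}|lborel. g s) \<longlongrightarrow> (LINT s:{0..}|lborel. g s)) at_top"
      by (rule tendsto_set_lebesgue_integral_at_top[OF _ intA]) auto
    moreover have "\<forall>\<^sub>F R in at_top. (LINT s:{0..R}|lborel. g s) = integral {0..R} g"
    proof (intro always_eventually allI)
      fix R :: real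
      have "set_integrable lborel {0..R} g" by (rule set_integrable_subset[OF intA]) auto
      thus "(LINT s:{0..R}|lborel. g s) = integral {0..R} g" by (rule set_borel_integral_eq_integral)
    qed
    ultimately show ?thesis by (rule Lim_transform_eventually)
  qed
  define V where "V = (\<lambda>R. integral {0..R*\<tau>} (\<lambda>s. (complex_of_real \<sigma> * \<i>) * k (p3 R s)))"
  have L2: "(V \<longlongrightarrow> 0) at_top"
  proof (rule Lim_null_comparison)
    show "((\<lambda>R. M / (2*c*(R - \<bar>x\<bar>) - \<beta>)) \<longlongrightarrow> 0) at_top" using c by real_asymp
    have "\<forall>\<^sub>F R in at_top. R \<ge> \<bar>x\<bar> + (\<beta> + 1)/(2*c)" by (rule eventually_ge_at_top)
    thus "\<forall>\<^sub>F R in at_top. norm (V R) \<le> M / (2*c*(R - \<bar>x\<bar>) - \<beta>)"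
    proof eventually_elim
      case (elim R)
      define D where "D = 2*c*(R - \<bar>x\<bar>) - \<beta>"
      have "(\<beta> + 1)/(2*c)*(2*c) \<le> (R - \<bar>x\<bar>)*(2*c)" using elim c by (intro mult_right_mono) auto
      moreover have "(\<beta> + 1)/(2*c)*(2*c) = \<beta> + 1" using c by simp
      moreover have "(R - \<bar>x\<bar>)*(2*c) = 2*c*(R - \<bar>x\<bar>)" by simp
      ultimately have D1: "1 \<le> D" unfolding D_def by linarith
      have R0: "0 \<le> R" using elim c b by (smt (verit) divide_nonneg_pos)
      have Rt: "0 \<le> R * \<tau>" using R0 tau by simp
      have hi: "((\<lambda>s. M * exp (- D * s)) has_integral M * ((1 - exp (- D * (R*\<tau>))) / D)) {0..R*\<tau>}"
        by (rule has_integral_mult_right[OF exp_int_bound]) (use D1 Rt in auto)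
      have "norm (V R) \<le> integral {0..R*\<tau>} (\<lambda>s. M * exp (- D * s))"
        unfolding V_def
      proof (rule integral_norm_bound_integral)
        show "(\<lambda>s. (complex_of_real \<sigma> * \<i>) * k (p3 R s)) integrable_on {0..R*\<tau>}"
          using I3[OF R0] by blast
        show "(\<lambda>s. M * exp (- D * s)) integrable_on {0..R*\<tau>}" using hi by blast
        fix s assume s: "s \<in> {0..R*\<tau>}"
        have "p3 R s \<in> cone \<tau> \<sigma>" using im3[of R] s by blast
        hence "cmod (k (p3 R s)) \<le> M * exp (-2*c*(Re (p3 R s) - x)*Im (p3 R s) + \<beta>*\<bar>Im (p3 R s)\<bar>)"
          by (rule bnd)
        also have "\<dots> \<le> M * exp (- D * s)"
        proof (intro mult_left_mono M exp_le_cancel_iff[THEN iffD2])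
          have sx: "\<sigma>*x \<le> \<bar>x\<bar>" using sig by auto
          have a1: "\<bar>Im (p3 R s)\<bar> = s" using s as by (simp add: re3 abs_mult)
          have "-2*c*(Re (p3 R s) - x)*Im (p3 R s) = -2*c*(R - \<sigma>*x)* s"
            unfolding re3 using ss by (simp add: algebra_simps)
          also have "\<dots> \<le> -2*c*(R - \<bar>x\<bar>)* s"
            using sx s c by (intro mult_right_mono) (auto simp: mult_le_cancel_left)
          finally show "-2*c*(Re (p3 R s) - x)*Im (p3 R s) + \<beta>*\<bar>Im (p3 R s)\<bar> \<le> - D * s"
            unfolding a1 D_def by (simp add: algebra_simps)
        qed
        finally show "norm ((complex_of_real \<sigma> * \<i>) * k (p3 R s)) \<le> M * exp (- D * s)"
          using as by (simp add: norm_mult)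
      qed
      also have "\<dots> = M * ((1 - exp (- D * (R*\<tau>))) / D)" using hi by (rule integral_unique)
      also have "\<dots> \<le> M * (1 / D)"
        using D1 M by (intro mult_left_mono divide_right_mono) auto
      finally show ?case unfolding D_def by simp
    qed
  qed
  have "((\<lambda>R. integral {0..R} g - V R) \<longlongrightarrow> (LINT s:{0..}|lborel. g s) - 0) at_top"
    by (intro tendsto_diff L1 L2)
  moreover have "\<forall>\<^sub>F R in at_top. integral {0..R} g - V R =
       integral {0..R} (\<lambda>s. complex_of_real \<sigma> * k (complex_of_real (\<sigma> * s)))"
    using eventually_ge_at_top[of "0::real"] by eventually_elim (use eqR V_def in metis)
  ultimately have "((\<lambda>R. integral {0..R} (\<lambda>s. complex_of_real \<sigma> * k (complex_of_real (\<sigma> * s))))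
     \<longlongrightarrow> (LINT s:{0..}|lborel. g s)) at_top" by (simp add: Lim_transform_eventually)
  thus ?B unfolding g_def .
qed

definition Lh :: "real \<Rightarrow> real \<Rightarrow> (complex \<Rightarrow> complex) \<Rightarrow> complex" where
  "Lh \<tau> \<sigma> k = (LINT s:{0..}|lborel. complex_of_real \<sigma> * (1 + \<i> * complex_of_real \<tau>) *
            k (complex_of_real \<sigma> * complex_of_real s * (1 + \<i> * complex_of_real \<tau>)))"

lemma full_line:
  fixes k :: "complex \<Rightarrow> complex" and \<Omega> :: "complex set"
  assumes hol: "k holomorphic_on \<Omega>" and op: "open \<Omega>"
    and sub1: "cone \<tau> 1 \<subseteq> \<Omega>" and sub2: "cone \<tau> (-1) \<subseteq> \<Omega>"
    and tau: "0 < \<tau>" "\<tau> < 1"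
    and c: "0 < c" and M: "0 \<le> M" and b: "0 \<le> \<beta>"
    and bnd: "\<And>z. z \<in> cone \<tau> 1 \<union> cone \<tau> (-1) \<Longrightarrow> cmod (k z) \<le> M * exp (-2*c*(Re z - x)*Im z + \<beta>*\<bar>Im z\<bar>)"
  shows "((\<lambda>(R1, R2). LINT y:{-R1..R2}|lborel. k (complex_of_real y)) \<longlongrightarrow> Lh \<tau> 1 k - Lh \<tau> (-1) k)
           (at_top \<times>\<^sub>F at_top)"
proof -
  have hp: "((\<lambda>R. integral {0..R} (\<lambda>s. complex_of_real 1 * k (complex_of_real (1 * s)))) \<longlongrightarrow> Lh \<tau> 1 k) at_top"
    unfolding Lh_def by (rule half_line(2)[OF hol op sub1 tau _ c M b]) (use bnd in auto)
  have hm: "((\<lambda>R. integral {0..R} (\<lambda>s. complex_of_real (-1) * k (complex_of_real (-1 * s)))) \<longlongrightarrow> Lh \<tau> (-1) k) at_top"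
    unfolding Lh_def by (rule half_line(2)[OF hol op sub2 tau _ c M b]) (use bnd in auto)
  define Ip where "Ip = (\<lambda>R. integral {0..R} (\<lambda>s. k (complex_of_real s)))"
  define Im' where "Im' = (\<lambda>R. integral {0..R} (\<lambda>s. - k (complex_of_real (- s))))"
  have hp': "(Ip \<longlongrightarrow> Lh \<tau> 1 k) at_top" using hp by (simp add: Ip_def)
  have hm': "(Im' \<longlongrightarrow> Lh \<tau> (-1) k) at_top" using hm by (simp add: Im'_def)
  have reals: "complex_of_real y \<in> \<Omega>" for y
  proof (cases "0 \<le> y")
    case True thus ?thesis using sub1 tau by (auto simp: cone_def)
  next
    case False
    hence "\<tau> * y < 0" using tau by (simp add: mult_pos_neg)
    hence "complex_of_real y \<in> cone \<tau> (-1)" by (simp add: cone_def)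
    thus ?thesis using sub2 by auto
  qed
  have contr: "continuous_on S (\<lambda>y. k (complex_of_real y))" for S
    by (rule continuous_on_compose2[OF holomorphic_on_imp_continuous_on[OF hol]])
       (auto intro!: continuous_intros simp: reals)
  have eq: "(LINT y:{-R1..R2}|lborel. k (complex_of_real y)) = Ip R2 - Im' R1"
    if "0 \<le> R1" "0 \<le> R2" for R1 R2
  proof -
    have "(LINT y:{-R1..R2}|lborel. k (complex_of_real y)) = integral {-R1..R2} (\<lambda>y. k (complex_of_real y))"
      by (rule set_borel_integral_eq_integral(2)[OF borel_integrable_atLeastAtMost'[OF contr]])
    also have "\<dots> = integral {-R1..0} (\<lambda>y. k (complex_of_real y)) + integral {0..R2} (\<lambda>y. k (complex_of_real y))"
      by (rule Henstock_Kurzweil_Integration.integral_combine[symmetric]) (use that in \<open>auto intro!: integrable_continuous_interval contr\<close>)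
    also have "integral {-R1..0} (\<lambda>y. k (complex_of_real y)) = integral {0..R1} (\<lambda>y. k (complex_of_real (- y)))"
      using Henstock_Kurzweil_Integration.integral_reflect_real[of 0 "-R1" "\<lambda>y. k (complex_of_real y)"] by simp
    also have "\<dots> = - Im' R1" unfolding Im'_def by simp
    finally show ?thesis unfolding Ip_def by simp
  qed
  have "((\<lambda>p. Ip (snd p) - Im' (fst p)) \<longlongrightarrow> Lh \<tau> 1 k - Lh \<tau> (-1) k) (at_top \<times>\<^sub>F at_top)"
    by (intro tendsto_diff filterlim_compose[OF hp' filterlim_snd] filterlim_compose[OF hm' filterlim_fst])
  moreover have "\<forall>\<^sub>F p in at_top \<times>\<^sub>F at_top. Ip (snd p) - Im' (fst p) =
        (\<lambda>(R1, R2). LINT y:{-R1..R2}|lborel. k (complex_of_real y)) p"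
  proof -
    have "\<forall>\<^sub>F p in (at_top::real filter) \<times>\<^sub>F (at_top::real filter). 0 \<le> fst p \<and> 0 \<le> snd p"
      unfolding eventually_prod_filter
      by (intro exI[of _ "\<lambda>x::real. 0 \<le> x"] conjI eventually_ge_at_top) auto
    thus ?thesis by eventually_elim (auto simp: eq)
  qed
  ultimately show ?thesis by (rule Lim_transform_eventually)
qed

lemma eps_lim:
  fixes k :: "complex \<Rightarrow> complex"
  assumes int: "set_integrable lborel {0..} (\<lambda>s. complex_of_real \<sigma> * (1 + \<i> * complex_of_real \<tau>) *
            k (complex_of_real \<sigma> * complex_of_real s * (1 + \<i> * complex_of_real \<tau>)))"
    and tau: "0 < \<tau>" "\<tau> < 1" and sig: "\<sigma> = 1 \<or> \<sigma> = -1"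
  shows "((\<lambda>\<epsilon>. Lh \<tau> \<sigma> (\<lambda>z. exp (- complex_of_real \<epsilon> * z\<^sup>2) * k z)) \<longlongrightarrow> Lh \<tau> \<sigma> k) (at_right 0)"
proof -
  define w where "w = (\<lambda>s. complex_of_real \<sigma> * complex_of_real s * (1 + \<i> * complex_of_real \<tau>))"
  define g where "g = (\<lambda>s. complex_of_real \<sigma> * (1 + \<i> * complex_of_real \<tau>) * k (w s))"
  define f where "f = (\<lambda>s. indicator {0::real..} s *\<^sub>R g s)"
  have intf: "integrable lborel f" using int unfolding set_integrable_def f_def g_def w_def .
  have ss: "\<sigma> * \<sigma> = 1" using sig by auto
  have rew: "Re ((w s)\<^sup>2) = s\<^sup>2 * (1 - \<tau>\<^sup>2)" for s
  proof -
    have "Re ((w s)\<^sup>2) = (\<sigma> * \<sigma>) * (s\<^sup>2 * (1 - \<tau>\<^sup>2))"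
      by (simp add: w_def power2_eq_square algebra_simps)
    thus ?thesis using ss by simp
  qed
  have t2: "\<tau>\<^sup>2 \<le> 1" using tau by (simp add: abs_le_square_iff[symmetric] power_le_one)
  have Lh_eq: "Lh \<tau> \<sigma> (\<lambda>z. exp (- complex_of_real \<epsilon> * z\<^sup>2) * k z) =
      integral\<^sup>L lborel (\<lambda>s. exp (- complex_of_real \<epsilon> * (w s)\<^sup>2) * f s)" for \<epsilon>
    unfolding Lh_def set_lebesgue_integral_def f_def g_def w_def
    by (rule Bochner_Integration.integral_cong) (auto simp: indicator_def)
  have Lh0: "Lh \<tau> \<sigma> k = integral\<^sup>L lborel f"
    unfolding Lh_def set_lebesgue_integral_def f_def g_def w_def ..
  have contw: "continuous_on UNIV w" unfolding w_def by (intro continuous_intros)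
  have "((\<lambda>t. integral\<^sup>L lborel (\<lambda>s. exp (- complex_of_real (inverse t) * (w s)\<^sup>2) * f s)) \<longlongrightarrow> integral\<^sup>L lborel f) at_top"
  proof (rule integral_dominated_convergence_at_top[where w="\<lambda>s. norm (f s)"])
    show "f \<in> borel_measurable lborel" using intf by (rule borel_measurable_integrable)
    show "(\<lambda>s. exp (- complex_of_real (inverse t) * (w s)\<^sup>2) * f s) \<in> borel_measurable lborel" for t
    proof (rule borel_measurable_times)
      have "continuous_on UNIV (\<lambda>s. exp (- complex_of_real (inverse t) * (w s)\<^sup>2))"
        using contw by (intro continuous_intros) (auto intro: continuous_on_subset)
      thus "(\<lambda>s. exp (- complex_of_real (inverse t) * (w s)\<^sup>2)) \<in> borel_measurable lborel"
        using borel_measurable_continuous_onI by simp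
    qed (use intf in \<open>rule borel_measurable_integrable\<close>)
    show "integrable lborel (\<lambda>s. norm (f s))" using intf by (rule integrable_norm)
    show "AE s in lborel. ((\<lambda>t. exp (- complex_of_real (inverse t) * (w s)\<^sup>2) * f s) \<longlongrightarrow> f s) at_top"
    proof (intro AE_I2)
      fix s
      have "((\<lambda>t. exp (- complex_of_real (inverse t) * (w s)\<^sup>2) * f s) \<longlongrightarrow> exp (- complex_of_real 0 * (w s)\<^sup>2) * f s) at_top"
        by (intro tendsto_intros tendsto_inverse_0_at_top filterlim_ident)
      thus "((\<lambda>t. exp (- complex_of_real (inverse t) * (w s)\<^sup>2) * f s) \<longlongrightarrow> f s) at_top" by simp
    qed
    show "\<forall>\<^sub>F t in at_top. AE s in lborel. norm (exp (- complex_of_real (inverse t) * (w s)\<^sup>2) * f s) \<le> norm (f s)"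
    proof (rule eventually_mono[OF eventually_gt_at_top[of 0]], intro AE_I2)
      fix t s :: real assume t: "0 < t"
      have "Re (- complex_of_real (inverse t) * (w s)\<^sup>2) = - (inverse t * Re ((w s)\<^sup>2))"
        using t by (simp add: field_simps power2_eq_square)
      also have "\<dots> \<le> 0" using t t2 by (simp add: rew)
      finally have "norm (exp (- complex_of_real (inverse t) * (w s)\<^sup>2)) \<le> 1"
        by (simp add: norm_exp_eq_Re)
      thus "norm (exp (- complex_of_real (inverse t) * (w s)\<^sup>2) * f s) \<le> norm (f s)"
        by (simp add: norm_mult mult_left_le_one_le)
    qed
  qed
  hence "((\<lambda>t. Lh \<tau> \<sigma> (\<lambda>z. exp (- complex_of_real (inverse t) * z\<^sup>2) * k z)) \<longlongrightarrow> Lh \<tau> \<sigma> k) at_top"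
    unfolding Lh_eq Lh0 .
  thus ?thesis unfolding filterlim_at_right_to_top .
qed

lemma gauss_int:
  assumes e: "0 < (\<epsilon>::real)"
  shows "integrable lborel (\<lambda>y::real. exp (- \<epsilon> * y\<^sup>2))"
proof -
  define s0 where "s0 = sqrt (1 / (2 * \<epsilon>))"
  have s0p: "0 < s0" using e by (simp add: s0_def)
  have s2: "s0\<^sup>2 = 1 / (2 * \<epsilon>)" using e by (simp add: s0_def)
  have a: "2 * pi * s0\<^sup>2 = pi / \<epsilon>" using e by (simp add: s2)
  have b: "(y - 0)\<^sup>2 / (2 * s0\<^sup>2) = \<epsilon> * y\<^sup>2" for y using e by (simp add: s2)
  have pe: "0 < sqrt (pi / \<epsilon>)" using e by simp
  have eq: "exp (- \<epsilon> * y\<^sup>2) = sqrt (pi / \<epsilon>) * normal_density 0 s0 y" for y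
    unfolding normal_density_def a
    using pe e by (simp add: s2)
  have fe: "(\<lambda>y. exp (- \<epsilon> * y\<^sup>2)) = (\<lambda>y. sqrt (pi / \<epsilon>) * normal_density 0 s0 y)"
    by (rule ext) (rule eq)
  show ?thesis unfolding fe using s0p by (intro integrable_mult_right integrable_normal_density)
qed

theorem mainTheorem5:
  fixes T :: ereal and V :: "real \<Rightarrow> real \<Rightarrow> complex" and \<alpha> :: real
    and \<Omega> :: "complex set" and G :: "real \<Rightarrow> real \<Rightarrow> complex \<Rightarrow> complex"
    and F :: "complex \<Rightarrow> complex" and A B :: real and t x :: real
  assumes "assumption_G_Im T V \<alpha> \<Omega> G"
    and "F holomorphic_on \<Omega>"
    and "0 \<le> A" and "0 \<le> B"
    and "\<forall>z\<in>\<Omega>. cmod (F z) \<le> A * exp (B * \<bar>Im z\<bar>)"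
    and "t \<in> time_int T"
  shows "(\<forall>\<epsilon>>0. integrable lborel
            (\<lambda>y. complex_of_real (exp (- \<epsilon> * y\<^sup>2)) * G t x (complex_of_real y) * F (complex_of_real y))) \<and>
         (\<exists>L. ((\<lambda>\<epsilon>. LINT y|lborel.
                    complex_of_real (exp (- \<epsilon> * y\<^sup>2)) * G t x (complex_of_real y) * F (complex_of_real y))
                 \<longlongrightarrow> L) (at_right 0) \<and>
              ((\<lambda>(R1, R2). LINT y:{-R1..R2}|lborel. G t x (complex_of_real y) * F (complex_of_real y))
                 \<longlongrightarrow> L) (at_top \<times>\<^sub>F at_top))"
proof -
  note GA = assms(1)[unfolded assumption_G_Im_def]
  have al1: "0 < \<alpha>" using GA by (elim conjE) assumption
  have al2: "\<alpha> < pi/2" using GA by (elim conjE) assumption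
  note al = al1 al2
  have op: "open \<Omega>" using GA by (elim conjE) assumption
  have ds: "double_sector \<alpha> \<subseteq> \<Omega>" using GA by (elim conjE) assumption
  have "\<forall>t\<in>time_int T. \<forall>x. (G t x) holomorphic_on \<Omega>" using GA by (elim conjE) assumption
  hence holG: "G t x holomorphic_on \<Omega>" using assms(6) by blast
  obtain a Gtil A0 B0 where
    apos: "\<forall>t\<in>time_int T. 0 < a t" and
    fac: "\<forall>t\<in>time_int T. \<forall>x. \<forall>z\<in>\<Omega>.
          G t x z = exp (\<i> * complex_of_real (a t) * (z - complex_of_real x)\<^sup>2) * Gtil t x z" and
    gb: "\<forall>t\<in>time_int T. \<forall>x. \<forall>z\<in>\<Omega>. cmod (Gtil t x z) \<le> A0 t x * exp (B0 t x * \<bar>Im z\<bar>)" and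
    nn: "\<forall>t\<in>time_int T. \<forall>x. 0 \<le> A0 t x \<and> 0 \<le> B0 t x"
    using GA by (elim conjE exE) (rule that; assumption)
  define c where "c = a t"
  define M where "M = A0 t x * A"
  define \<beta> where "\<beta> = B0 t x + B"
  have c: "0 < c" using apos assms(6) by (simp add: c_def)
  have M: "0 \<le> M" using nn assms(3,6) by (simp add: M_def)
  have b: "0 \<le> \<beta>" using nn assms(4,6) by (simp add: \<beta>_def)
  define \<tau> where "\<tau> = min (1/2) (tan \<alpha>)"
  have ta: "0 < tan \<alpha>" using al by (simp add: tan_gt_zero)
  have tau: "0 < \<tau>" "\<tau> < 1" "\<tau> \<le> tan \<alpha>" using ta by (auto simp: \<tau>_def)
  have sub1: "cone \<tau> 1 \<subseteq> \<Omega>" using cone_sub[OF tau(1) tau(3) al] ds by auto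
  have sub2: "cone \<tau> (-1) \<subseteq> \<Omega>" using cone_sub[OF tau(1) tau(3) al] ds by auto
  define k0 where "k0 = (\<lambda>z. G t x z * F z)"
  have hol0: "k0 holomorphic_on \<Omega>" unfolding k0_def using holG assms(2) by (intro holomorphic_intros)
  have bnd0: "cmod (k0 z) \<le> M * exp (-2*c*(Re z - x)*Im z + \<beta>*\<bar>Im z\<bar>)" if z: "z \<in> \<Omega>" for z
  proof -
    have ReE: "Re (\<i> * complex_of_real c * (z - complex_of_real x)\<^sup>2) = -2*c*(Re z - x)*Im z"
      by (simp add: power2_eq_square algebra_simps)
    have ImE: "Im ((z - complex_of_real x)\<^sup>2) = 2 * ((Re z - x) * Im z)"
      by (simp add: power2_eq_square algebra_simps)
    have "cmod (k0 z) = exp (-2*c*(Re z - x)*Im z) * cmod (Gtil t x z) * cmod (F z)"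
      using fac assms(6) z by (simp add: k0_def c_def[symmetric] norm_mult norm_exp_eq_Re ReE ImE)
    also have "\<dots> \<le> exp (-2*c*(Re z - x)*Im z) * (A0 t x * exp (B0 t x * \<bar>Im z\<bar>)) * (A * exp (B * \<bar>Im z\<bar>))"
      using gb assms(5,6) z nn by (intro mult_mono mult_left_mono) auto
    also have "\<dots> = M * exp (-2*c*(Re z - x)*Im z + \<beta>*\<bar>Im z\<bar>)"
    proof -
      have e: "exp (-2*c*(Re z - x)*Im z + \<beta>*\<bar>Im z\<bar>) =
          exp (-2*c*(Re z - x)*Im z) * exp (B0 t x * \<bar>Im z\<bar>) * exp (B * \<bar>Im z\<bar>)"
        unfolding \<beta>_def mult_exp_exp by (simp add: algebra_simps)
      show ?thesis unfolding e M_def by (simp add: mult_ac)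
    qed
    finally show ?thesis .
  qed
  have cone_sq: "(Im z)\<^sup>2 \<le> (Re z)\<^sup>2" if zz: "z \<in> cone \<tau> 1 \<union> cone \<tau> (-1)" for z
  proof -
    obtain \<sigma> where sg: "\<sigma> = 1 \<or> \<sigma> = -1" and zc: "z \<in> cone \<tau> \<sigma>" using zz by auto
    have h: "0 \<le> \<sigma> * Im z" "\<sigma> * Im z \<le> \<tau> * (\<sigma> * Re z)" using zc by (auto simp: cone_def)
    have "0 \<le> \<sigma> * Re z"
    proof (rule ccontr)
      assume "\<not> 0 \<le> \<sigma> * Re z"
      hence "\<tau> * (\<sigma> * Re z) < 0" using tau by (simp add: mult_pos_neg)
      thus False using h by linarith
    qed
    hence "\<tau> * (\<sigma> * Re z) \<le> \<sigma> * Re z" using tau by (simp add: mult_left_le_one_le)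
    hence "(\<sigma> * Im z)\<^sup>2 \<le> (\<sigma> * Re z)\<^sup>2" using h by (intro power_mono) auto
    thus ?thesis using sg by auto
  qed
  have bnd0': "cmod (k0 z) \<le> M * exp (-2*c*(Re z - x)*Im z + \<beta>*\<bar>Im z\<bar>)"
    if "z \<in> cone \<tau> 1 \<union> cone \<tau> (-1)" for z
    using bnd0 sub1 sub2 that by auto
  define ke where "ke = (\<lambda>\<epsilon> z. exp (- complex_of_real \<epsilon> * z\<^sup>2) * k0 z)"
  have hole: "ke \<epsilon> holomorphic_on \<Omega>" for \<epsilon>
    unfolding ke_def using hol0 by (intro holomorphic_intros)
  have bnde: "cmod (ke \<epsilon> z) \<le> M * exp (-2*c*(Re z - x)*Im z + \<beta>*\<bar>Im z\<bar>)"
    if e: "0 \<le> \<epsilon>" and z: "z \<in> cone \<tau> 1 \<union> cone \<tau> (-1)" for \<epsilon> z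
  proof -
    have "Re (- complex_of_real \<epsilon> * z\<^sup>2) = - (\<epsilon> * ((Re z)\<^sup>2 - (Im z)\<^sup>2))"
      by (simp add: power2_eq_square algebra_simps)
    also have "\<dots> \<le> 0" using cone_sq[OF z] e by simp
    finally have "cmod (exp (- complex_of_real \<epsilon> * z\<^sup>2)) \<le> 1" by (simp add: norm_exp_eq_Re)
    hence "cmod (ke \<epsilon> z) \<le> cmod (k0 z)" unfolding ke_def by (simp add: norm_mult mult_left_le_one_le)
    thus ?thesis using bnd0'[OF z] by linarith
  qed
  define L where "L = Lh \<tau> 1 k0 - Lh \<tau> (-1) k0"
  have FL0: "((\<lambda>(R1, R2). LINT y:{-R1..R2}|lborel. k0 (complex_of_real y)) \<longlongrightarrow> L) (at_top \<times>\<^sub>F at_top)"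
    unfolding L_def by (rule full_line[OF hol0 op sub1 sub2 tau(1,2) c M b bnd0'])
  have int1: "set_integrable lborel {0..} (\<lambda>s. complex_of_real 1 * (1 + \<i> * complex_of_real \<tau>) *
            k0 (complex_of_real 1 * complex_of_real s * (1 + \<i> * complex_of_real \<tau>)))"
    by (rule half_line(1)[OF hol0 op sub1 tau(1,2) _ c M b]) (use bnd0' in auto)
  have int2: "set_integrable lborel {0..} (\<lambda>s. complex_of_real (-1) * (1 + \<i> * complex_of_real \<tau>) *
            k0 (complex_of_real (-1) * complex_of_real s * (1 + \<i> * complex_of_real \<tau>)))"
    by (rule half_line(1)[OF hol0 op sub2 tau(1,2) _ c M b]) (use bnd0' in auto)
  have EL: "((\<lambda>\<epsilon>. Lh \<tau> 1 (ke \<epsilon>) - Lh \<tau> (-1) (ke \<epsilon>)) \<longlongrightarrow> L) (at_right 0)"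
    unfolding L_def ke_def
    by (intro tendsto_diff eps_lim[OF int1 tau(1,2)] eps_lim[OF int2 tau(1,2)]) auto
  define \<phi> where "\<phi> = (\<lambda>\<epsilon> y. complex_of_real (exp (- \<epsilon> * y\<^sup>2)) * G t x (complex_of_real y) * F (complex_of_real y))"
  have phi: "\<phi> \<epsilon> y = ke \<epsilon> (complex_of_real y)" for \<epsilon> y
  proof -
    have "exp (- complex_of_real \<epsilon> * (complex_of_real y)\<^sup>2) = complex_of_real (exp (- \<epsilon> * y\<^sup>2))"
      by (simp add: exp_of_real[symmetric])
    thus ?thesis by (simp add: \<phi>_def ke_def k0_def mult.assoc)
  qed
  have reals: "complex_of_real y \<in> \<Omega>" for y
  proof (cases "0 \<le> y")
    case True thus ?thesis using sub1 tau by (auto simp: cone_def)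
  next
    case False
    hence "\<tau> * y < 0" using tau by (simp add: mult_pos_neg)
    hence "complex_of_real y \<in> cone \<tau> (-1)" by (simp add: cone_def)
    thus ?thesis using sub2 by auto
  qed
  have intphi: "integrable lborel (\<phi> \<epsilon>)" if e: "0 < \<epsilon>" for \<epsilon>
  proof (rule Bochner_Integration.integrable_bound)
    show "integrable lborel (\<lambda>y. M * exp (- \<epsilon> * y\<^sup>2))"
      using gauss_int[OF e] by (rule integrable_mult_right)
    have "continuous_on UNIV (\<lambda>y. ke \<epsilon> (complex_of_real y))"
      by (rule continuous_on_compose2[OF holomorphic_on_imp_continuous_on[OF hole]])
         (auto intro!: continuous_intros simp: reals)
    hence "(\<lambda>y. ke \<epsilon> (complex_of_real y)) \<in> borel_measurable borel"
      by (rule borel_measurable_continuous_onI)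
    thus "\<phi> \<epsilon> \<in> borel_measurable lborel" by (simp add: phi[abs_def])
    show "AE y in lborel. norm (\<phi> \<epsilon> y) \<le> norm (M * exp (- \<epsilon> * y\<^sup>2))"
    proof (intro AE_I2)
      fix y
      have "cmod (k0 (complex_of_real y)) \<le> M" using bnd0[OF reals[of y]] by simp
      moreover have "norm (\<phi> \<epsilon> y) = exp (- \<epsilon> * y\<^sup>2) * cmod (k0 (complex_of_real y))"
        unfolding phi ke_def by (simp add: norm_mult norm_exp_eq_Re power2_eq_square)
      ultimately have "norm (\<phi> \<epsilon> y) \<le> exp (- \<epsilon> * y\<^sup>2) * M"
        by (simp add: mult_left_mono)
      thus "norm (\<phi> \<epsilon> y) \<le> norm (M * exp (- \<epsilon> * y\<^sup>2))" using M by (simp add: mult.commute)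
    qed
  qed
  have keq: "LINT y|lborel. \<phi> \<epsilon> y = Lh \<tau> 1 (ke \<epsilon>) - Lh \<tau> (-1) (ke \<epsilon>)" if e: "0 < \<epsilon>" for \<epsilon>
  proof -
    have FLe: "((\<lambda>(R1, R2). LINT y:{-R1..R2}|lborel. ke \<epsilon> (complex_of_real y)) \<longlongrightarrow>
        Lh \<tau> 1 (ke \<epsilon>) - Lh \<tau> (-1) (ke \<epsilon>)) (at_top \<times>\<^sub>F at_top)"
      by (rule full_line[OF hole op sub1 sub2 tau(1,2) c M b bnde]) (use e in auto)
    have "((\<lambda>R. (\<lambda>(R1, R2). LINT y:{-R1..R2}|lborel. ke \<epsilon> (complex_of_real y)) (R, R)) \<longlongrightarrow>
        Lh \<tau> 1 (ke \<epsilon>) - Lh \<tau> (-1) (ke \<epsilon>)) at_top"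
      by (rule filterlim_compose[OF FLe filterlim_Pair[OF filterlim_ident filterlim_ident]])
    hence A1: "((\<lambda>R. LINT y:{-R..R}|lborel. \<phi> \<epsilon> y) \<longlongrightarrow> Lh \<tau> 1 (ke \<epsilon>) - Lh \<tau> (-1) (ke \<epsilon>)) at_top"
      by (simp add: phi)
    have A2: "((\<lambda>R. LINT y:{-R..R}|lborel. \<phi> \<epsilon> y) \<longlongrightarrow> (LINT y|lborel. \<phi> \<epsilon> y)) at_top"
      unfolding set_lebesgue_integral_def
    proof (rule integral_dominated_convergence_at_top[where w="\<lambda>y. norm (\<phi> \<epsilon> y)"])
      have m: "\<phi> \<epsilon> \<in> borel_measurable lborel" using intphi[OF e] by (rule borel_measurable_integrable)
      thus "\<phi> \<epsilon> \<in> borel_measurable lborel" .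
      show "(\<lambda>y. indicator {-R..R} y *\<^sub>R \<phi> \<epsilon> y) \<in> borel_measurable lborel" for R
        using m by (intro borel_measurable_scaleR borel_measurable_indicator) auto
      show "integrable lborel (\<lambda>y. norm (\<phi> \<epsilon> y))" using intphi[OF e] by (rule integrable_norm)
      show "AE y in lborel. ((\<lambda>R. indicator {-R..R} y *\<^sub>R \<phi> \<epsilon> y) \<longlongrightarrow> \<phi> \<epsilon> y) at_top"
      proof (intro AE_I2 tendsto_eventually)
        fix y :: real
        show "\<forall>\<^sub>F R in at_top. indicator {-R..R} y *\<^sub>R \<phi> \<epsilon> y = \<phi> \<epsilon> y"
          using eventually_ge_at_top[of "\<bar>y\<bar>"] by eventually_elim (auto simp: indicator_def)
      qed
      show "\<forall>\<^sub>F R in at_top. AE y in lborel. norm (indicator {-R..R} y *\<^sub>R \<phi> \<epsilon> y) \<le> norm (\<phi> \<epsilon> y)"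
        by (intro always_eventually allI AE_I2) (auto simp: indicator_def)
    qed
    show ?thesis using tendsto_unique[OF trivial_limit_at_top_linorder A2 A1] .
  qed
  show ?thesis
  proof (intro conjI allI impI exI)
    fix \<epsilon> :: real assume "0 < \<epsilon>"
    thus "integrable lborel (\<lambda>y. complex_of_real (exp (- \<epsilon> * y\<^sup>2)) * G t x (complex_of_real y) * F (complex_of_real y))"
      using intphi unfolding \<phi>_def by blast
  next
    have "\<forall>\<^sub>F \<epsilon> in at_right 0. Lh \<tau> 1 (ke \<epsilon>) - Lh \<tau> (-1) (ke \<epsilon>) = (LINT y|lborel. \<phi> \<epsilon> y)"
      using eventually_at_right_less[of "0::real"] by eventually_elim (simp add: keq)
    from Lim_transform_eventually[OF EL this]
    show "((\<lambda>\<epsilon>. LINT y|lborel. complex_of_real (exp (- \<epsilon> * y\<^sup>2)) * G t x (complex_of_real y) * F (complex_of_real y))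
                 \<longlongrightarrow> L) (at_right 0)" unfolding \<phi>_def .
  next
    show "((\<lambda>(R1, R2). LINT y:{-R1..R2}|lborel. G t x (complex_of_real y) * F (complex_of_real y))
                 \<longlongrightarrow> L) (at_top \<times>\<^sub>F at_top)" using FL0 unfolding k0_def .
  qed
qed

end
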